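(* Let $r\ge1$ and $k\ge1$ be integers. If $\vec a,\vec b\in\mathcal H_{r,k}$ have disjoint support, i.e. $a_i\ne b_j$ for all $i,j$, then transforming $\vec a$ into $\vec b$ in the Hanoi game on $\mathcal H_{r,k}$ requires exactly $2^k-1$ moves. The same holds for $\vec a,\vec b\in\mathcal H^*_{r,k}$ with disjoint support in the Hanoi game on $\mathcal H^*_{r,k}$.
   Context: A Hanoi state is a finite sequence of nonnegative integers $\vec x=(x_1,\dots,x_k)$ with $x_i\ne x_{i-1}$ for all $i>1$. $\mathcal H_{r,k}$ is the set of Hanoi states in $\{0,1,\dots,r\}^k$, and $\mathcal H^*_{r,k}\subseteq\mathcal H_{r,k}$ is the set of proper Hanoi states, those with $x_1\ne0$. In the Hanoi game on $\mathcal H_{r,k}$ a state is transformed by moves of two types: (1) an adjustment changes $x_k$ to any other value in $\{0,1,\dots,r\}$ different from $x_{k-1}$ (if $k=1$, to any other value); (2) for $k\ge2$, an involution finds the longest final segment $(x_j,\dots,x_k)$ of $\vec x$ on which the entries alternate between the values $x_k$ and $x_{k-1}$, and swaps the values $x_k$ and $x_{k-1}$ throughout that segment (e.g. $(1,2,3,4)\mapsto(1,2,4,3)$, $(1,2,1,2)\mapsto(2,1,2,1)$). The Hanoi game on $\mathcal H^*_{r,k}$ is the same but all states involved must be proper (moves that would make $x_1=0$ are forbidden). The number of moves required is the minimum length of a sequence of moves transforming $\vec a$ into $\vec b$. *)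

theory Defs
  imports Main
begin

text \<open>States are lists of naturals; the paper's x_1,...,x_k is xs!0,...,xs!(k-1).\<close>

definition hanoi_states :: "nat \<Rightarrow> nat \<Rightarrow> nat list set" where
  "hanoi_states r k = {xs. length xs = k \<and> (\<forall>i<k. xs ! i \<le> r) \<and>
       (\<forall>i. 0 < i \<and> i < k \<longrightarrow> xs ! i \<noteq> xs ! (i - 1))}"

definition proper_hanoi_states :: "nat \<Rightarrow> nat \<Rightarrow> nat list set" where
  "proper_hanoi_states r k = {xs \<in> hanoi_states r k. xs ! 0 \<noteq> 0}"

definition adjustment :: "nat \<Rightarrow> nat list \<Rightarrow> nat list \<Rightarrow> bool" where
  "adjustment r xs ys \<longleftrightarrow> (\<exists>v. length xs \<ge> 1 \<and> v \<le> r \<and> v \<noteq> xs ! (length xs - 1) \<and>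
       (length xs \<ge> 2 \<longrightarrow> v \<noteq> xs ! (length xs - 2)) \<and>
       ys = xs[length xs - 1 := v])"

definition swap_val :: "nat \<Rightarrow> nat \<Rightarrow> nat \<Rightarrow> nat" where
  "swap_val p q x = (if x = p then q else if x = q then p else x)"

definition involution :: "nat list \<Rightarrow> nat list" where
  "involution xs = (let k = length xs; p = xs ! (k - 1); q = xs ! (k - 2);
      j = (LEAST j. \<forall>i. j \<le> i \<and> i < k \<longrightarrow> xs ! i \<in> {p, q})
    in take j xs @ map (swap_val p q) (drop j xs))"

definition hanoi_move :: "nat list set \<Rightarrow> nat \<Rightarrow> (nat list \<times> nat list) set" where
  "hanoi_move S r = {(xs, ys). xs \<in> S \<and> ys \<in> S \<and>
       (adjustment r xs ys \<or> (length xs \<ge> 2 \<and> ys = involution xs))}"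

definition min_moves :: "nat list set \<Rightarrow> nat \<Rightarrow> nat list \<Rightarrow> nat list \<Rightarrow> nat \<Rightarrow> bool" where
  "min_moves S r a b n \<longleftrightarrow> (a, b) \<in> (hanoi_move S r) ^^ n \<and>
       (\<forall>m<n. (a, b) \<notin> (hanoi_move S r) ^^ m)"

end

theory Submission
  imports Defs
begin

lemma hanoi_alt:
  "xs \<in> hanoi_states r k \<longleftrightarrow> length xs = k \<and> (\<forall>x\<in>set xs. x \<le> r) \<and> successively (\<noteq>) xs"
proof -
  have 1: "(\<forall>i<length xs. xs ! i \<le> r) \<longleftrightarrow> (\<forall>x\<in>set xs. x \<le> r)"
    by (simp add: all_set_conv_all_nth)
  have 2: "(\<forall>i. 0 < i \<and> i < length xs \<longrightarrow> xs ! i \<noteq> xs ! (i - 1)) \<longleftrightarrow> successively (\<noteq>) xs"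
    unfolding successively_conv_nth
  proof
    assume h: "\<forall>i. 0 < i \<and> i < length xs \<longrightarrow> xs ! i \<noteq> xs ! (i - 1)"
    show "\<forall>i. Suc i < length xs \<longrightarrow> xs ! i \<noteq> xs ! Suc i"
    proof (intro allI impI)
      fix i assume "Suc i < length xs"
      then show "xs ! i \<noteq> xs ! Suc i" using h[rule_format, of "Suc i"] by auto
    qed
  next
    assume h: "\<forall>i. Suc i < length xs \<longrightarrow> xs ! i \<noteq> xs ! Suc i"
    show "\<forall>i. 0 < i \<and> i < length xs \<longrightarrow> xs ! i \<noteq> xs ! (i - 1)"
    proof (intro allI impI)
      fix i assume a: "0 < i \<and> i < length xs"
      then obtain j where "i = Suc j" by (cases i) auto
      then show "xs ! i \<noteq> xs ! (i - 1)" using h[rule_format, of j] a by auto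
    qed
  qed
  show ?thesis unfolding hanoi_states_def using 1 2 by auto
qed

lemma adjustment_alt:
  "adjustment r xs ys \<longleftrightarrow> xs \<noteq> [] \<and> (\<exists>v. v \<le> r \<and> v \<noteq> last xs \<and>
      (butlast xs \<noteq> [] \<longrightarrow> v \<noteq> last (butlast xs)) \<and> ys = butlast xs @ [v])"
proof (cases "xs = []")
  case True then show ?thesis by (simp add: adjustment_def)
next
  case False
  have a: "xs ! (length xs - 1) = last xs" using False by (simp add: last_conv_nth)
  have b: "xs ! (length xs - 2) = last (butlast xs)" if h: "butlast xs \<noteq> []"
  proof -
    have "last (butlast xs) = butlast xs ! (length (butlast xs) - 1)"
      using h by (rule last_conv_nth)
    also have "\<dots> = xs ! (length xs - 2)"
    proof -
      have "length (butlast xs) \<noteq> 0" using h by (metis length_0_conv)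
      then have l: "length xs \<ge> 2" by simp
      then show ?thesis by (subst nth_butlast) (auto simp: numeral_2_eq_2)
    qed
    finally show ?thesis by simp
  qed
  have c: "xs[length xs - 1 := v] = butlast xs @ [v]" for v
    using False by (metis append_butlast_last_id length_butlast list_update_length)
  have d0: "(butlast xs \<noteq> []) = (length xs - 1 \<noteq> 0)" by (metis length_0_conv length_butlast)
  have d: "(length xs \<ge> 2) = (butlast xs \<noteq> [])" unfolding d0 using False by (cases xs) (auto simp: Suc_le_eq)
  have "length xs \<ge> 1" using False by (cases xs) auto
  then show ?thesis unfolding adjustment_def using False a b c d
    by auto
qed


lemma swap_val_simps[simp]:
  "swap_val b a a = b" "swap_val b a b = a" "swap_val a b (swap_val b a x) = x"
  by (auto simp: swap_val_def)

lemma swap_val_sym: "swap_val a b = swap_val b a"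
  by (auto simp: swap_val_def fun_eq_iff)

lemma swap_val_inj: "swap_val b a x = swap_val b a y \<Longrightarrow> x = y"
  by (metis swap_val_simps(3))

lemma swap_val_in: "x \<in> {a, b} \<Longrightarrow> swap_val b a x \<in> {a, b}"
  by (auto simp: swap_val_def)

lemma inv_form:
  assumes zs: "set zs \<subseteq> {a, b}" and ys: "ys \<noteq> [] \<longrightarrow> last ys \<notin> {a, b}"
  shows "involution (ys @ zs @ [a, b]) = ys @ map (swap_val b a) zs @ [b, a]"
proof -
  define xs where "xs = ys @ zs @ [a, b]"
  have L: "length xs = length ys + length zs + 2" by (simp add: xs_def)
  have p: "xs ! (length xs - 1) = b" unfolding xs_def
    by (simp add: nth_append)
  have q: "xs ! (length xs - 2) = a" unfolding xs_def
    by (simp add: nth_append numeral_2_eq_2)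
  have least: "(LEAST j. \<forall>i. j \<le> i \<and> i < length xs \<longrightarrow> xs ! i \<in> {b, a}) = length ys"
  proof (rule Least_equality)
    show "\<forall>i. length ys \<le> i \<and> i < length xs \<longrightarrow> xs ! i \<in> {b, a}"
    proof (intro allI impI)
      fix i assume i: "length ys \<le> i \<and> i < length xs"
      have "xs ! i = (zs @ [a, b]) ! (i - length ys)" unfolding xs_def
        using i by (simp add: nth_append)
      moreover have "i - length ys < length (zs @ [a, b])" using i L by (simp; linarith)
      ultimately have "xs ! i \<in> set (zs @ [a, b])" by (metis nth_mem)
      then show "xs ! i \<in> {b, a}" using zs by auto
    qed
  next
    fix y assume h: "\<forall>i. y \<le> i \<and> i < length xs \<longrightarrow> xs ! i \<in> {b, a}"
    show "length ys \<le> y"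
    proof (rule ccontr)
      assume "\<not> length ys \<le> y"
      then have y: "y < length ys" by simp
      then have ne: "ys \<noteq> []" by auto
      have "xs ! (length ys - 1) = last ys" unfolding xs_def using ne
        by (simp add: nth_append last_conv_nth)
      moreover have "y \<le> length ys - 1 \<and> length ys - 1 < length xs" using y L by linarith
      then have "xs ! (length ys - 1) \<in> {b, a}" using h by blast
      ultimately show False using ys ne by auto
    qed
  qed
  show ?thesis
    unfolding involution_def Let_def xs_def[symmetric] p q least
    by (simp add: xs_def)
qed

lemma inv_exists:
  "\<exists>ys zs. ws = ys @ zs \<and> set zs \<subseteq> {a, b} \<and> (ys \<noteq> [] \<longrightarrow> last ys \<notin> {a, b})"
proof -
  define P where "P = (\<lambda>v. v \<in> {a, b})"
  define ys where "ys = rev (dropWhile P (rev ws))"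
  define zs where "zs = rev (takeWhile P (rev ws))"
  have "ws = ys @ zs" unfolding ys_def zs_def
    by (metis rev_append rev_rev_ident takeWhile_dropWhile_id)
  moreover have "set zs \<subseteq> {a, b}" unfolding zs_def P_def
    by (auto dest: set_takeWhileD)
  moreover have "ys \<noteq> [] \<longrightarrow> last ys \<notin> {a, b}"
  proof
    assume "ys \<noteq> []"
    then have ne: "dropWhile P (rev ws) \<noteq> []" unfolding ys_def by simp
    have "last ys = hd (dropWhile P (rev ws))" unfolding ys_def using ne
      by (simp add: last_rev)
    then show "last ys \<notin> {a, b}" using hd_dropWhile[OF ne] unfolding P_def by simp
  qed
  ultimately show ?thesis by blast
qed


lemma succ_map_swap: "successively (\<noteq>) L \<Longrightarrow> successively (\<noteq>) (map (swap_val b a) L)"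
  unfolding successively_map by (erule successively_mono) (metis swap_val_inj)

lemma snoc2: "length xs \<ge> 2 \<Longrightarrow> \<exists>ws a b. xs = ws @ [a, b]"
proof -
  assume h: "length xs \<ge> 2"
  obtain ws1 b where 1: "xs = ws1 @ [b]" using h by (cases xs rule: rev_cases) auto
  obtain ws a where 2: "ws1 = ws @ [a]" using h 1 by (cases ws1 rule: rev_cases) auto
  show ?thesis using 1 2 by auto
qed

lemma butlast_hanoi:
  assumes "xs \<in> hanoi_states r k" "k \<ge> 2"
  shows "butlast xs \<in> hanoi_states r (k - 1)"
proof -
  have ne: "xs \<noteq> []" using assms by (auto simp: hanoi_alt)
  have "successively (\<noteq>) (butlast xs @ [last xs])" using assms ne by (simp add: hanoi_alt)
  then have "successively (\<noteq>) (butlast xs)" by (simp add: successively_append_iff)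
  then show ?thesis using assms by (auto simp: hanoi_alt dest: in_set_butlastD)
qed

lemma inv_props:
  assumes xs: "xs \<in> hanoi_states r k" and k: "k \<ge> 2"
  shows "involution xs \<in> hanoi_states r k" "set (involution xs) \<subseteq> set xs"
    "involution (involution xs) = xs" "involution xs \<noteq> xs"
    "(butlast xs, butlast (involution xs)) \<in> hanoi_move (hanoi_states r (k - 1)) r"
proof -
  have len: "length xs = k" and bd: "\<forall>x\<in>set xs. x \<le> r" and sc: "successively (\<noteq>) xs"
    using xs by (auto simp: hanoi_alt)
  obtain ws a b where xw: "xs = ws @ [a, b]" using snoc2[of xs] len k by auto
  obtain ys zs where ws: "ws = ys @ zs" and zs: "set zs \<subseteq> {a, b}"
      and ys: "ys \<noteq> [] \<longrightarrow> last ys \<notin> {a, b}"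
    using inv_exists[of ws a b] by blast
  define f where "f = swap_val b a"
  define L where "L = zs @ [a, b]"
  have xsL: "xs = ys @ L" using xw ws L_def by simp
  have inv: "involution xs = ys @ map f L"
    using inv_form[OF zs ys] xw ws unfolding f_def L_def by simp
  have setL: "set L \<subseteq> {a, b}" using zs L_def by auto
  have setmL: "set (map f L) \<subseteq> {a, b}" using setL swap_val_in unfolding f_def by auto
  have scL: "successively (\<noteq>) L" and scys: "successively (\<noteq>) ys"
    using sc xsL by (auto simp: successively_append_iff)
  have ab: "a \<noteq> b" using sc xw by (simp add: successively_append_iff)
  have Lne: "L \<noteq> []" using L_def by simp
  have sc2: "successively (\<noteq>) (involution xs)"
    unfolding inv successively_append_iff
  proof (intro conjI)
    show "successively (\<noteq>) ys" by (rule scys)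
    show "successively (\<noteq>) (map f L)" unfolding f_def by (rule succ_map_swap[OF scL])
    show "ys = [] \<or> map f L = [] \<or> last ys \<noteq> hd (map f L)"
    proof (cases "ys = []")
      case False
      have "hd (map f L) \<in> set (map f L)" using Lne by (cases L) auto
      then show ?thesis using setmL ys False by auto
    qed simp
  qed
  have abx: "a \<in> set xs" "b \<in> set xs" using xw by auto
  show set: "set (involution xs) \<subseteq> set xs"
    unfolding inv using setmL abx xsL by auto
  show "involution xs \<in> hanoi_states r k"
    unfolding hanoi_alt using sc2 set bd len inv xsL by auto
  have inv2: "involution xs = ys @ map f zs @ [b, a]" using inv L_def f_def by simp
  have zs2: "set (map f zs) \<subseteq> {b, a}" using zs swap_val_in unfolding f_def by auto
  show "involution (involution xs) = xs"
  proof -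
    have ys2: "ys \<noteq> [] \<longrightarrow> last ys \<notin> {b, a}" using ys by auto
    have "involution (ys @ map f zs @ [b, a]) = ys @ map (swap_val a b) (map f zs) @ [a, b]"
      by (rule inv_form[OF zs2 ys2])
    then show ?thesis unfolding inv2 using xw ws f_def by (simp add: comp_def)
  qed
  show "involution xs \<noteq> xs" using inv2 xw ab by auto
  show "(butlast xs, butlast (involution xs)) \<in> hanoi_move (hanoi_states r (k - 1)) r"
  proof -
    have bx: "butlast xs = ys @ zs @ [a]" using xw ws by (simp add: butlast_append)
    have bi: "butlast (involution xs) = ys @ map f zs @ [b]" using inv2 by (simp add: butlast_append)
    have H1: "butlast xs \<in> hanoi_states r (k - 1)"
      using xs k by (rule butlast_hanoi)
    have H2: "butlast (involution xs) \<in> hanoi_states r (k - 1)"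
      using \<open>involution xs \<in> hanoi_states r k\<close> k by (rule butlast_hanoi)
    show ?thesis
    proof (cases zs rule: rev_cases)
      case Nil
      have "adjustment r (butlast xs) (butlast (involution xs))"
        unfolding adjustment_alt bx bi Nil using ab ys bd xw by auto
      then show ?thesis using H1 H2 unfolding hanoi_move_def by auto
    next
      case (snoc zs0 c)
      have "c \<in> {a, b}" using zs snoc by auto
      moreover have "c \<noteq> a" using sc xw ws snoc by (simp add: successively_append_iff)
      ultimately have cb: "c = b" by auto
      have zs0: "set zs0 \<subseteq> {b, a}" using zs snoc by auto
      have "involution (ys @ zs0 @ [b, a]) = ys @ map (swap_val a b) zs0 @ [a, b]"
        by (rule inv_form[OF zs0]) (use ys in auto)
      then have "involution (butlast xs) = butlast (involution xs)"
        unfolding bx bi snoc cb f_def by (simp add: swap_val_sym)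
      moreover have "length (butlast xs) \<ge> 2" unfolding bx snoc by simp
      ultimately show ?thesis using H1 H2 unfolding hanoi_move_def by auto
    qed
  qed
qed


lemma move_cases:
  assumes "(x, y) \<in> hanoi_move (hanoi_states r k) r"
  shows "x \<in> hanoi_states r k" "y \<in> hanoi_states r k" "y = involution x \<or> butlast y = butlast x"
  using assms unfolding hanoi_move_def adjustment_alt by auto

lemma snoc_hanoi:
  assumes "u \<in> hanoi_states r k" "u \<noteq> []" "t \<le> r" "t \<noteq> last u"
  shows "u @ [t] \<in> hanoi_states r (Suc k)"
  using assms unfolding hanoi_alt by (auto simp: successively_append_iff)

lemma lift:
  assumes u: "u \<in> hanoi_states r (k - 1)" and k: "k \<ge> 2"
    and mv: "(u, u') \<in> hanoi_move (hanoi_states r (k - 1)) r"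
  shows "\<exists>t. u @ [t] \<in> hanoi_states r k \<and> butlast (involution (u @ [t])) = u'"
proof -
  have len: "length u = k - 1" and bd: "\<forall>x\<in>set u. x \<le> r" and sc: "successively (\<noteq>) u"
    using u by (auto simp: hanoi_alt)
  have une: "u \<noteq> []" using len k by auto
  have kk: "Suc (k - 1) = k" using k by simp
  from mv have "adjustment r u u' \<or> (length u \<ge> 2 \<and> u' = involution u)"
    unfolding hanoi_move_def by auto
  then show ?thesis
  proof
    assume "adjustment r u u'"
    then obtain v where v: "v \<le> r" "v \<noteq> last u" "butlast u \<noteq> [] \<longrightarrow> v \<noteq> last (butlast u)"
      and u': "u' = butlast u @ [v]"
      unfolding adjustment_alt by auto
    have ue: "u = butlast u @ [last u]" using une by simp
    have "successively (\<noteq>) (butlast u @ [last u])" using sc by (subst ue[symmetric])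
    then have "butlast u \<noteq> [] \<longrightarrow> last (butlast u) \<noteq> last u"
      by (auto simp: successively_append_iff)
    then have ys: "butlast u \<noteq> [] \<longrightarrow> last (butlast u) \<notin> {last u, v}" using v by auto
    have i: "involution (butlast u @ [] @ [last u, v]) = butlast u @ map (swap_val v (last u)) [] @ [v, last u]"
      by (rule inv_form) (use ys in auto)
    have e: "u @ [v] = butlast u @ [] @ [last u, v]" by (subst ue) simp
    have "butlast (involution (u @ [v])) = butlast (butlast u @ map (swap_val v (last u)) [] @ [v, last u])"
      by (simp only: e i)
    then have "butlast (involution (u @ [v])) = u'" using u' by (simp add: butlast_append)
    moreover have "u @ [v] \<in> hanoi_states r k" using snoc_hanoi[OF u une v(1,2)] kk by simp
    ultimately show ?thesis by blast
  next
    assume h: "length u \<ge> 2 \<and> u' = involution u"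
    obtain ws a b where uw: "u = ws @ [a, b]" using snoc2[of u] h by auto
    obtain ys zs where ws: "ws = ys @ zs" and zs: "set zs \<subseteq> {a, b}"
      and ys: "ys \<noteq> [] \<longrightarrow> last ys \<notin> {a, b}"
      using inv_exists[of ws a b] by blast
    have i1: "involution u = ys @ map (swap_val b a) zs @ [b, a]"
      using inv_form[OF zs ys] uw ws by simp
    have zs2: "set (zs @ [a]) \<subseteq> {b, a}" using zs by auto
    have ys2: "ys \<noteq> [] \<longrightarrow> last ys \<notin> {b, a}" using ys by auto
    have i2: "involution (ys @ (zs @ [a]) @ [b, a]) = ys @ map (swap_val a b) (zs @ [a]) @ [a, b]"
      by (rule inv_form[OF zs2 ys2])
    have "u @ [a] = ys @ (zs @ [a]) @ [b, a]" using uw ws by simp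
    then have "butlast (involution (u @ [a])) = u'"
      using i1 i2 h by (simp add: butlast_append swap_val_sym)
    moreover have "a \<le> r" using bd uw by auto
    moreover have "a \<noteq> last u" using sc uw by (simp add: successively_append_iff)
    ultimately show ?thesis using snoc_hanoi[OF u une] kk by metis
  qed
qed


abbreviation HR :: "nat \<Rightarrow> nat \<Rightarrow> (nat list \<times> nat list) set" where
  "HR r k \<equiv> hanoi_move (hanoi_states r k) r"

definition fb :: "bool \<Rightarrow> nat list \<Rightarrow> nat list" where
  "fb s x = (if s then butlast (involution x) else butlast x)"

lemma fb_props:
  assumes "x \<in> hanoi_states r k" "k \<ge> 2"
  shows "fb s x \<in> hanoi_states r (k - 1)" "set (fb s x) \<subseteq> set x"
proof -
  show "fb s x \<in> hanoi_states r (k - 1)"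
    using assms inv_props(1)[OF assms] butlast_hanoi unfolding fb_def by auto
  show "set (fb s x) \<subseteq> set x"
    using inv_props(2)[OF assms] unfolding fb_def by (auto dest: in_set_butlastD)
qed

definition Inv :: "nat \<Rightarrow> nat \<Rightarrow> nat list \<Rightarrow> nat list \<Rightarrow> nat \<Rightarrow> bool" where
  "Inv r k a b n \<longleftrightarrow> (\<exists>s e j. (fb s a, fb e b) \<in> HR r (k - 1) ^^ j \<and>
        2 * j + 1 + (if s then 1 else 0) + (if e then 1 else 0) \<le> n)"

lemma InvI: "(fb s a, fb e b) \<in> HR r (k - 1) ^^ j \<Longrightarrow>
        2 * j + 1 + (if s then 1 else 0) + (if e then 1 else 0) \<le> n \<Longrightarrow> Inv r k a b n"
  unfolding Inv_def by blast

lemma invariant: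
  assumes k: "k \<ge> 2" and a: "a \<in> hanoi_states r k"
  shows "(a, b) \<in> HR r k ^^ n \<Longrightarrow> b = a \<or> (b = involution a \<and> n \<ge> 1) \<or> Inv r k a b n"
proof (induction n arbitrary: b)
  case 0
  then show ?case by simp
next
  case (Suc n)
  from Suc.prems obtain c where ac: "(a, c) \<in> HR r k ^^ n" and cb: "(c, b) \<in> HR r k"
    by (rule relpow_Suc_E)
  have cH: "c \<in> hanoi_states r k" and bH: "b \<in> hanoi_states r k"
    and cs: "b = involution c \<or> butlast b = butlast c" using move_cases[OF cb] by auto
  have ic: "involution (involution c) = c" using inv_props(3)[OF cH k] .
  from Suc.IH[OF ac] consider (A) "c = a" | (B) "c = involution a \<and> n \<ge> 1"
    | (C) s e j where "(fb s a, fb e c) \<in> HR r (k - 1) ^^ j"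
        "2 * j + 1 + (if s then 1 else 0) + (if e then 1 else 0) \<le> n"
    unfolding Inv_def by blast
  then show ?case
  proof cases
    case A
    show ?thesis
    proof (cases "b = involution c")
      case True then show ?thesis using A by simp
    next
      case False
      then have "butlast b = butlast a" using cs A by simp
      then have "(fb False a, fb False b) \<in> HR r (k - 1) ^^ 0" by (simp add: fb_def)
      moreover have "2 * 0 + 1 + (if False then 1 else 0) + (if False then 1 else 0) \<le> Suc n" by simp
      ultimately show ?thesis using InvI by blast
    qed
  next
    case B
    show ?thesis
    proof (cases "b = involution c")
      case True then show ?thesis using B inv_props(3)[OF a k] by simp
    next
      case False
      then have "butlast b = butlast (involution a)" using cs B by simp
      then have "(fb True a, fb False b) \<in> HR r (k - 1) ^^ 0" by (simp add: fb_def)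
      moreover have "2 * 0 + 1 + (if True then 1 else 0) + (if False then 1 else 0) \<le> Suc n"
        using B by simp
      ultimately show ?thesis using InvI by blast
    qed
  next
    case C
    show ?thesis
    proof (cases "b = involution c")
      case True
      then have "fb (\<not> e) b = fb e c" using ic by (simp add: fb_def)
      then have "(fb s a, fb (\<not> e) b) \<in> HR r (k - 1) ^^ j" using C(1) by simp
      moreover have "2 * j + 1 + (if s then 1 else 0) + (if \<not> e then 1 else 0) \<le> Suc n"
        using C(2) by (cases e) auto
      ultimately show ?thesis using InvI by blast
    next
      case False
      then have bc: "butlast b = butlast c" using cs by simp
      show ?thesis
      proof (cases e)
        case False
        then have "(fb s a, fb False b) \<in> HR r (k - 1) ^^ j" using C(1) bc by (simp add: fb_def)
        moreover have "2 * j + 1 + (if s then 1 else 0) + (if False then 1 else 0) \<le> Suc n"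
          using C(2) by simp
        ultimately show ?thesis using InvI by blast
      next
        case True
        have icH: "involution c \<in> hanoi_states r k" using inv_props(1)[OF cH k] .
        have "(butlast (involution c), butlast (involution (involution c))) \<in> HR r (k - 1)"
          using inv_props(5)[OF icH k] .
        then have "(fb e c, fb False b) \<in> HR r (k - 1)" using True ic bc by (simp add: fb_def)
        then have "(fb s a, fb False b) \<in> HR r (k - 1) ^^ Suc j" by (rule relpow_Suc_I[OF C(1)])
        moreover have "2 * Suc j + 1 + (if s then 1 else 0) + (if False then 1 else 0) \<le> Suc n"
          using C(2) True by simp
        ultimately show ?thesis using InvI by blast
      qed
    qed
  qed
qed

lemma lower:
  "k \<ge> 1 \<Longrightarrow> a \<in> hanoi_states r k \<Longrightarrow> b \<in> hanoi_states r k \<Longrightarrow> set a \<inter> set b = {} \<Longrightarrow>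
    (a, b) \<in> HR r k ^^ n \<Longrightarrow> 2 ^ k - 1 \<le> n"
proof (induction k arbitrary: a b n)
  case 0
  then show ?case by simp
next
  case (Suc k)
  have ane: "a \<noteq> []" using Suc.prems by (auto simp: hanoi_alt)
  have bne: "b \<noteq> []" using Suc.prems by (auto simp: hanoi_alt)
  have ab: "a \<noteq> b" using ane Suc.prems(4) by (cases a) auto
  show ?case
  proof (cases "k = 0")
    case True
    have "n \<noteq> 0" using ab Suc.prems(5) by (cases n) auto
    then show ?thesis using True by simp
  next
    case False
    have K: "Suc k \<ge> 2" using False by simp
    have nia: "b \<noteq> involution a"
    proof
      assume "b = involution a"
      then have "set b \<subseteq> set a" using inv_props(2)[OF Suc.prems(2) K] by simp
      then show False using bne Suc.prems(4) by (cases b) auto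
    qed
    from invariant[OF K Suc.prems(2) Suc.prems(5)] ab nia have "Inv r (Suc k) a b n" by auto
    then obtain s e j where
      j: "(fb s a, fb e b) \<in> HR r k ^^ j"
         "2 * j + 1 + (if s then 1 else 0) + (if e then 1 else 0) \<le> n" unfolding Inv_def by auto
    have u: "fb s a \<in> hanoi_states r k" "set (fb s a) \<subseteq> set a"
      using fb_props[OF Suc.prems(2) K] by auto
    have v: "fb e b \<in> hanoi_states r k" "set (fb e b) \<subseteq> set b"
      using fb_props[OF Suc.prems(3) K] by auto
    have "set (fb s a) \<inter> set (fb e b) = {}" using u(2) v(2) Suc.prems(4) by auto
    then have "2 ^ k - 1 \<le> j" using Suc.IH[OF _ u(1) v(1) _ j(1)] False by simp
    then show ?thesis using j(2) by simp
  qed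
qed


definition SS :: "bool \<Rightarrow> nat \<Rightarrow> nat \<Rightarrow> nat list set" where
  "SS P r k = {xs \<in> hanoi_states r k. P \<longrightarrow> xs ! 0 \<noteq> 0}"

abbreviation SR :: "bool \<Rightarrow> nat \<Rightarrow> nat \<Rightarrow> (nat list \<times> nat list) set" where
  "SR P r k \<equiv> hanoi_move (SS P r k) r"

lemma SS_False: "SS False r k = hanoi_states r k" by (simp add: SS_def)
lemma SS_True: "SS True r k = proper_hanoi_states r k" by (simp add: SS_def proper_hanoi_states_def)

lemma SS_sub: "SS P r k \<subseteq> hanoi_states r k" by (auto simp: SS_def)

lemma SR_sub: "SR P r k \<subseteq> HR r k"
  using SS_sub unfolding hanoi_move_def by blast

lemma relpow_mono_sub: fixes R Q :: "('a \<times> 'a) set" shows "R \<subseteq> Q \<Longrightarrow> (x, y) \<in> R ^^ n \<Longrightarrow> (x, y) \<in> Q ^^ n"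
proof (induction n arbitrary: y)
  case 0 then show ?case by simp
next
  case (Suc n)
  from Suc.prems(2) obtain z where "(x, z) \<in> R ^^ n" "(z, y) \<in> R" by (rule relpow_Suc_E)
  then show ?case using Suc by (meson relpow_Suc_I subsetD)
qed

lemma SS_butlast:
  assumes "k \<ge> 2" "x \<in> hanoi_states r k"
  shows "x \<in> SS P r k \<longleftrightarrow> butlast x \<in> SS P r (k - 1)"
proof -
  have "length x = k" using assms by (simp add: hanoi_alt)
  then have "butlast x ! 0 = x ! 0" using assms by (simp add: nth_butlast)
  then show ?thesis using assms butlast_hanoi unfolding SS_def by auto
qed

lemma adj_same:
  assumes a: "a \<in> hanoi_states r k" and b: "b \<in> hanoi_states r k" and ne: "a \<noteq> []"
    and bl: "butlast a = butlast b" and ab: "a \<noteq> b"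
  shows "adjustment r a b"
proof -
  have bne: "b \<noteq> []" using a b ne by (auto simp: hanoi_alt)
  have ae: "a = butlast a @ [last a]" using ne by simp
  have be: "b = butlast a @ [last b]" using bne bl by simp
  have "last b \<noteq> last a" using ab ae be by metis
  moreover have "last b \<le> r" using b bne by (auto simp: hanoi_alt)
  moreover have "butlast a \<noteq> [] \<longrightarrow> last b \<noteq> last (butlast a)"
  proof
    assume h: "butlast a \<noteq> []"
    have "successively (\<noteq>) (butlast a @ [last b])" using b by (subst be[symmetric]) (simp add: hanoi_alt)
    then show "last b \<noteq> last (butlast a)" using h by (auto simp: successively_append_iff)
  qed
  ultimately show ?thesis unfolding adjustment_alt using ne be by blast
qed

lemma up_lift:
  assumes k: "k \<ge> 2"
  shows "(butlast a, butlast b) \<in> SR P r (k - 1) ^^ j \<Longrightarrow> a \<in> SS P r k \<Longrightarrow> b \<in> SS P r k \<Longrightarrow>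
     \<exists>m \<le> 2 * j + 1. (a, b) \<in> SR P r k ^^ m"
proof (induction j arbitrary: a)
  case 0
  have aH: "a \<in> hanoi_states r k" and bH: "b \<in> hanoi_states r k" using 0 SS_sub by auto
  have ne: "a \<noteq> []" using aH k by (auto simp: hanoi_alt)
  show ?case
  proof (cases "a = b")
    case True
    then have "(a, b) \<in> SR P r k ^^ 0" by simp
    then show ?thesis by blast
  next
    case False
    have "adjustment r a b" using adj_same[OF aH bH ne _ False] 0 by simp
    then have "(a, b) \<in> SR P r k" using 0 unfolding hanoi_move_def by auto
    then have "(a, b) \<in> SR P r k ^^ 1" by simp
    then show ?thesis by (intro exI[of _ 1]) simp
  qed
next
  case (Suc j)
  from Suc.prems(1) obtain u' where m1: "(butlast a, u') \<in> SR P r (k - 1)"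
    and m2: "(u', butlast b) \<in> SR P r (k - 1) ^^ j" by (rule relpow_Suc_E2)
  have aH: "a \<in> hanoi_states r k" using Suc.prems SS_sub by auto
  have ne: "a \<noteq> []" using aH k by (auto simp: hanoi_alt)
  have baH: "butlast a \<in> hanoi_states r (k - 1)" using butlast_hanoi[OF aH k] .
  have baS: "butlast a \<in> SS P r (k - 1)" using SS_butlast[OF k aH] Suc.prems by simp
  have u'S: "u' \<in> SS P r (k - 1)" using m1 unfolding hanoi_move_def by auto
  have "(butlast a, u') \<in> HR r (k - 1)" using m1 SR_sub by blast
  from lift[OF baH k this] obtain t where xH: "butlast a @ [t] \<in> hanoi_states r k"
    and xi: "butlast (involution (butlast a @ [t])) = u'" by blast
  define x where "x = butlast a @ [t]"
  have xS: "x \<in> SS P r k" using SS_butlast[OF k xH] baS x_def by simp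
  have yH: "involution x \<in> hanoi_states r k" using inv_props(1)[OF xH k] x_def by simp
  have yS: "involution x \<in> SS P r k" using SS_butlast[OF k yH] xi u'S x_def by simp
  have lx: "length x \<ge> 2" using xH k x_def by (simp add: hanoi_alt)
  have xy: "(x, involution x) \<in> SR P r k" using xS yS lx unfolding hanoi_move_def by auto
  from Suc.IH[of "involution x"] m2 xi yS Suc.prems(3) x_def obtain m where
    m: "m \<le> 2 * j + 1" "(involution x, b) \<in> SR P r k ^^ m" by auto
  have yb: "(x, b) \<in> SR P r k ^^ Suc m" using relpow_Suc_I2[OF xy m(2)] .
  show ?case
  proof (cases "a = x")
    case True
    then show ?thesis using yb m(1) by (intro exI[of _ "Suc m"]) auto
  next
    case False
    have bx: "butlast a = butlast x" using x_def by simp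
    have xH2: "x \<in> hanoi_states r k" using xH x_def by simp
    have "adjustment r a x" by (rule adj_same[OF aH xH2 ne bx False])
    then have "(a, x) \<in> SR P r k" using Suc.prems(2) xS unfolding hanoi_move_def by auto
    then have "(a, b) \<in> SR P r k ^^ Suc (Suc m)" using yb by (rule relpow_Suc_I2)
    then show ?thesis using m(1) by (intro exI[of _ "Suc (Suc m)"]) auto
  qed
qed

lemma upper:
  "k \<ge> 1 \<Longrightarrow> a \<in> SS P r k \<Longrightarrow> b \<in> SS P r k \<Longrightarrow> set a \<inter> set b = {} \<Longrightarrow>
    \<exists>m \<le> 2 ^ k - 1. (a, b) \<in> SR P r k ^^ m"
proof (induction k arbitrary: a b)
  case 0
  then show ?case by simp
next
  case (Suc k)
  have aH: "a \<in> hanoi_states r (Suc k)" and bH: "b \<in> hanoi_states r (Suc k)"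
    using Suc.prems SS_sub[of P r "Suc k"] by blast+
  have ane: "a \<noteq> []" using aH by (auto simp: hanoi_alt)
  have ab: "a \<noteq> b" using ane Suc.prems(4) by (cases a) auto
  show ?case
  proof (cases "k = 0")
    case True
    have la: "length a = 1" "length b = 1" using aH bH True by (auto simp: hanoi_alt)
    then have "butlast a = butlast b" by (simp add: butlast_conv_take)
    then have "adjustment r a b" using adj_same[OF aH bH ane _ ab] by simp
    then have "(a, b) \<in> SR P r (Suc k)" using Suc.prems unfolding hanoi_move_def by auto
    then have "(a, b) \<in> SR P r (Suc k) ^^ 1" by simp
    then show ?thesis using True by (intro exI[of _ 1]) simp
  next
    case False
    have K: "Suc k \<ge> 2" using False by simp
    have ba: "butlast a \<in> SS P r k" using SS_butlast[OF K aH] Suc.prems by simp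
    have bb: "butlast b \<in> SS P r k" using SS_butlast[OF K bH] Suc.prems by simp
    have "set (butlast a) \<inter> set (butlast b) = {}" using Suc.prems(4)
      by (auto dest: in_set_butlastD)
    then obtain m' where m': "m' \<le> 2 ^ k - 1" "(butlast a, butlast b) \<in> SR P r k ^^ m'"
      using Suc.IH[OF _ ba bb] False by auto
    have "\<exists>m \<le> 2 * m' + 1. (a, b) \<in> SR P r (Suc k) ^^ m"
      using up_lift[OF K, of a b m' P r] m'(2) Suc.prems(2,3) by simp
    then obtain m where
      m: "m \<le> 2 * m' + 1" "(a, b) \<in> SR P r (Suc k) ^^ m" by blast
    have p1: "(1::nat) \<le> 2 ^ k" by simp
    have p2: "2 ^ Suc k = 2 * (2::nat) ^ k" by simp
    have "2 * m' + 1 \<le> 2 ^ Suc k - 1" unfolding p2 using m'(1) p1 by linarith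
    then show ?thesis using m by (intro exI[of _ m]) auto
  qed
qed

lemma main_P:
  assumes "k \<ge> 1" "a \<in> SS P r k" "b \<in> SS P r k" "set a \<inter> set b = {}"
  shows "min_moves (SS P r k) r a b (2 ^ k - 1)"
proof -
  obtain m where m: "m \<le> 2 ^ k - 1" "(a, b) \<in> SR P r k ^^ m" using upper[OF assms] by blast
  have lb: "2 ^ k - 1 \<le> m'" if "(a, b) \<in> SR P r k ^^ m'" for m'
  proof -
    have "(a, b) \<in> HR r k ^^ m'" using relpow_mono_sub[OF SR_sub that] .
    then show ?thesis using lower[OF assms(1) _ _ assms(4)] assms(2,3) SS_sub by blast
  qed
  have "m = 2 ^ k - 1" using lb[OF m(2)] m(1) by simp
  then show ?thesis unfolding min_moves_def using m(2) lb by (auto simp: not_le[symmetric])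
qed

theorem lemma6:
  fixes r k :: nat
  assumes "r \<ge> 1" and "k \<ge> 1"
  shows "(\<forall>a\<in>hanoi_states r k. \<forall>b\<in>hanoi_states r k. set a \<inter> set b = {} \<longrightarrow>
            min_moves (hanoi_states r k) r a b (2 ^ k - 1))
       \<and> (\<forall>a\<in>proper_hanoi_states r k. \<forall>b\<in>proper_hanoi_states r k. set a \<inter> set b = {} \<longrightarrow>
            min_moves (proper_hanoi_states r k) r a b (2 ^ k - 1))"
  using main_P[OF assms(2), of _ False r] main_P[OF assms(2), of _ True r]
  unfolding SS_False SS_True by blast

end
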